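(* Let $n\ge2$, let $\mathcal{P}$ be a distribution on $\mathcal{Z}$, let $\mathcal{A}:\mathcal{Z}^{n-1}\to\mathcal{W}\subseteq\mathbb{R}^K$ be a deterministic algorithm and let $\ell:\mathcal{W}\times\mathcal{Z}\to[0,1]$ be a loss that is $L$-Lipschitz in the weights, i.e. $|\ell(w,z)-\ell(w',z)|\le L\|w-w'\|$ for all $w,w',z$ (with $\ell$ extended to all of $\mathbb{R}^K$ with the same properties so that noisy weights can be evaluated). If $\mathcal{A}$ has $\epsilon$-weight stability relative to a positive definite matrix $\Sigma$, then \[ \mathrm{gen}(\mathcal{A})\le\sqrt{4c_n\,\epsilon\, L\sqrt{\mathrm{tr}(\Sigma)}},\qquad c_n=\frac{n}{n-1}. \]
   Context: $\mathcal{A}$ has $\epsilon$-weight stability relative to $\Sigma$ if for all $z^{n-1},\hat z^{n-1}\in\mathcal{Z}^{n-1}$ differing in at most one entry, $a=\mathcal{A}(z^{n-1})-\mathcal{A}(\hat z^{n-1})$ satisfies $a^T\Sigma^{-1}a\le\epsilon^2$. True loss $\mathcal{L}(w)=\mathbb{E}_{Z'\sim\mathcal{P}}\ell(w,Z')$, empirical loss $\widehat{\mathcal{L}}(w,z^m)=\frac1m\sum_i\ell(w,z_i)$, and $\mathrm{gen}(\mathcal{A})=|\mathbb{E}_{Z^{n-1}\sim\mathcal{P}^{n-1}}[\mathcal{L}(\mathcal{A}(Z^{n-1}))-\widehat{\mathcal{L}}(\mathcal{A}(Z^{n-1}),Z^{n-1})]|$. *)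

theory Defs
  imports "HOL-Probability.Probability"
begin

definition pos_def_mat :: "real^'k^'k \<Rightarrow> bool" where
  "pos_def_mat S \<longleftrightarrow> transpose S = S \<and> (\<forall>x. x \<noteq> 0 \<longrightarrow> x \<bullet> (S *v x) > 0)"

text \<open>Samples z^(m) are represented as extensional functions on {..<m} with values in space M.\<close>
definition weight_stable ::
  "'z measure \<Rightarrow> nat \<Rightarrow> ((nat \<Rightarrow> 'z) \<Rightarrow> real^'k) \<Rightarrow> real^'k^'k \<Rightarrow> real \<Rightarrow> bool" where
  "weight_stable M m A S eps \<longleftrightarrow>
     (\<forall>z \<in> PiE {..<m} (\<lambda>_. space M). \<forall>z' \<in> PiE {..<m} (\<lambda>_. space M).
        (\<exists>i<m. \<forall>j<m. j \<noteq> i \<longrightarrow> z j = z' j) \<longrightarrow>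
        (let a = A z - A z' in a \<bullet> (matrix_inv S *v a) \<le> eps\<^sup>2))"

definition true_loss :: "'z measure \<Rightarrow> (real^'k \<Rightarrow> 'z \<Rightarrow> real) \<Rightarrow> real^'k \<Rightarrow> real" where
  "true_loss M l w = (\<integral>z'. l w z' \<partial>M)"

definition emp_loss :: "nat \<Rightarrow> (real^'k \<Rightarrow> 'z \<Rightarrow> real) \<Rightarrow> real^'k \<Rightarrow> (nat \<Rightarrow> 'z) \<Rightarrow> real" where
  "emp_loss m l w z = (1 / real m) * (\<Sum>i<m. l w (z i))"

definition gen_err ::
  "'z measure \<Rightarrow> nat \<Rightarrow> ((nat \<Rightarrow> 'z) \<Rightarrow> real^'k) \<Rightarrow> (real^'k \<Rightarrow> 'z \<Rightarrow> real) \<Rightarrow> real" where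
  "gen_err M m A l =
     \<bar>\<integral>z. (true_loss M l (A z) - emp_loss m l (A z) z) \<partial>(PiM {..<m} (\<lambda>_. M))\<bar>"

end

theory Submission
  imports Defs
begin


lemma psd_cs:
  fixes S :: "real^'k^'k"
  assumes "pos_def_mat S"
  shows "(x \<bullet> (S *v y))^2 \<le> (x \<bullet> (S *v x)) * (y \<bullet> (S *v y))"
proof -
  have sym: "\<And>u v. u \<bullet> (S *v v) = v \<bullet> (S *v u)"
  proof -
    fix u v
    have "u \<bullet> (S *v v) = (u v* S) \<bullet> v" by (simp add: dot_lmul_matrix)
    also have "u v* S = transpose S *v u" by simp
    also have "\<dots> = S *v u" using assms by (simp add: pos_def_mat_def)
    finally show "u \<bullet> (S *v v) = v \<bullet> (S *v u)" by (simp add: inner_commute)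
  qed
  have nn: "\<And>v. 0 \<le> v \<bullet> (S *v v)"
    using assms unfolding pos_def_mat_def by (metis inner_zero_left order.strict_implies_order order_refl)
  show ?thesis
  proof (cases "y = 0")
    case True then show ?thesis by simp
  next
    case False
    then have q: "y \<bullet> (S *v y) > 0" using assms by (simp add: pos_def_mat_def)
    define t where "t = (x \<bullet> (S *v y)) / (y \<bullet> (S *v y))"
    have "0 \<le> (x - t *\<^sub>R y) \<bullet> (S *v (x - t *\<^sub>R y))" by (rule nn)
    also have "\<dots> = x \<bullet> (S *v x) - 2 * t * (x \<bullet> (S *v y)) + t^2 * (y \<bullet> (S *v y))"
      using sym[of y x]
      by (simp add: matrix_vector_mult_diff_distrib matrix_vector_mult_scaleR inner_diff_left inner_diff_right power2_eq_square algebra_simps)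
    also have "\<dots> = x \<bullet> (S *v x) - (x \<bullet> (S *v y))^2 / (y \<bullet> (S *v y))"
      using q by (simp add: t_def field_simps power2_eq_square)
    finally show ?thesis using q by (simp add: field_simps)
  qed
qed

lemma norm_bound_inv:
  fixes S :: "real^'k^'k"
  assumes "pos_def_mat S"
  shows "(norm a)^2 \<le> (a \<bullet> (matrix_inv S *v a)) * trace S"
proof -
  have "\<forall>x. S *v x = 0 \<longrightarrow> x = 0" using assms unfolding pos_def_mat_def
    by (metis inner_zero_right less_irrefl)
  then have "invertible S" using matrix_left_invertible_ker invertible_left_inverse by blast
  then have inv: "S ** matrix_inv S = mat 1" unfolding matrix_inv_def invertible_def by (metis (mono_tags, lifting) someI_ex)
  define b where "b = matrix_inv S *v a"
  have a: "a = S *v b" unfolding b_def by (simp add: matrix_vector_mul_assoc inv)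
  have "(norm a)^2 = (\<Sum>i\<in>UNIV. (a$i)^2)" unfolding power2_norm_eq_inner inner_vec_def by (simp add: power2_eq_square)
  also have "\<dots> \<le> (\<Sum>i\<in>UNIV. S$i$i * (b \<bullet> (S *v b)))"
  proof (rule sum_mono)
    fix i
    have ai: "a$i = axis i 1 \<bullet> (S *v b)" by (simp add: a inner_axis')
    have sii: "axis i 1 \<bullet> (S *v axis i 1) = S$i$i" by (simp only: inner_axis') (simp add: matrix_vector_mult_def axis_def if_distrib cong: if_cong)
    show "(a$i)^2 \<le> S$i$i * (b \<bullet> (S *v b))" using psd_cs[OF assms, of "axis i 1" b] ai sii by simp
  qed
  also have "\<dots> = (a \<bullet> (matrix_inv S *v a)) * trace S"
  proof -
    have "a \<bullet> (matrix_inv S *v a) = b \<bullet> (S *v b)" unfolding b_def[symmetric] by (simp add: a inner_commute)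
    then show ?thesis by (simp add: trace_def sum_distrib_left mult.commute)
  qed
  finally show ?thesis .
qed


lemma prob_integral_abs_le:
  fixes G :: "'a \<Rightarrow> real"
  assumes "prob_space N" and b: "\<And>x. x \<in> space N \<Longrightarrow> \<bar>G x\<bar> \<le> c"
  shows "\<bar>\<integral>x. G x \<partial>N\<bar> \<le> c"
proof -
  interpret prob_space N by fact
  obtain x0 where "x0 \<in> space N" using not_empty by blast
  then have c0: "0 \<le> c" using b[of x0] by linarith
  have "(\<integral>\<^sup>+x. ennreal \<bar>G x\<bar> \<partial>N) \<le> (\<integral>\<^sup>+x. ennreal c \<partial>N)"
    by (rule nn_integral_mono) (simp add: b ennreal_leI)
  also have "\<dots> = ennreal c" by (simp add: emeasure_space_1)
  finally have "(\<integral>x. \<bar>G x\<bar> \<partial>N) \<le> c" by (rule integral_real_bounded[OF c0])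
  then show ?thesis using integral_abs_bound[of N G] by linarith
qed

lemma bdd_integrable:
  fixes f :: "'a \<Rightarrow> real"
  assumes "prob_space N" "f \<in> borel_measurable N" "\<And>x. x \<in> space N \<Longrightarrow> \<bar>f x\<bar> \<le> B"
  shows "integrable N f"
proof -
  interpret prob_space N by fact
  show ?thesis by (rule integrable_const_bound[where B=B]) (use assms in \<open>auto intro!: AE_I2\<close>)
qed

lemma l_comp:
  assumes ml: "(\<lambda>(w, z). l w z) \<in> borel_measurable (borel \<Otimes>\<^sub>M M)"
    and f: "f \<in> measurable N borel" and g: "g \<in> measurable N M"
  shows "(\<lambda>x. l (f x) (g x)) \<in> borel_measurable N"
  using measurable_compose[OF measurable_Pair[OF f g] ml] by simp

lemma inner_swap_bound:
  fixes l :: "'w::topological_space \<Rightarrow> 'z \<Rightarrow> real"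
  assumes M: "prob_space M"
    and ml: "(\<lambda>(w, z). l w z) \<in> borel_measurable (borel \<Otimes>\<^sub>M M)"
    and h: "h \<in> measurable M borel"
    and lb: "\<And>w z. z \<in> space M \<Longrightarrow> 0 \<le> l w z \<and> l w z \<le> 1"
    and st: "\<And>y y'. y \<in> space M \<Longrightarrow> y' \<in> space M \<Longrightarrow> \<bar>l (h y) y' - l (h y') y'\<bar> \<le> c"
  shows "\<bar>\<integral>y. ((\<integral>y'. l (h y) y' \<partial>M) - l (h y) y) \<partial>M\<bar> \<le> c"
proof -
  interpret prob_space M by fact
  interpret pair_prob_space M M by unfold_locales
  define K where "K y y' = l (h y) y'" for y y'
  have mK: "case_prod K \<in> borel_measurable (M \<Otimes>\<^sub>M M)"
    unfolding K_def split_beta'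
    by (rule l_comp[OF ml]) (auto intro: measurable_compose[OF measurable_fst h])
  have bK: "\<And>y y'. y' \<in> space M \<Longrightarrow> \<bar>K y y'\<bar> \<le> 1" using lb by (simp add: K_def)
  have iK: "integrable (M \<Otimes>\<^sub>M M) (case_prod K)"
    by (rule bdd_integrable[OF P.prob_space_axioms, where B=1]) (auto simp: space_pair_measure bK mK)
  have mdiag: "(\<lambda>y. K y y) \<in> borel_measurable M"
    unfolding K_def by (rule l_comp[OF ml h]) simp
  have idiag: "integrable M (\<lambda>y. K y y)"
    by (rule bdd_integrable[OF M, where B=1]) (auto simp: bK mdiag)
  have mI: "(\<lambda>y. \<integral>y'. K y y' \<partial>M) \<in> borel_measurable M"
    using mK by measurable
  have bI: "\<bar>\<integral>y'. K y y' \<partial>M\<bar> \<le> 1" for y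
    by (rule prob_integral_abs_le[OF M]) (use bK in auto)
  have iI: "integrable M (\<lambda>y. \<integral>y'. K y y' \<partial>M)"
    by (rule bdd_integrable[OF M, where B=1]) (auto simp: bI mI)
  have mI2: "(\<lambda>y'. \<integral>y. K y y' \<partial>M) \<in> borel_measurable M"
  proof -
    have "case_prod (\<lambda>y' y. K y y') \<in> borel_measurable (M \<Otimes>\<^sub>M M)"
      unfolding K_def split_beta' by (rule l_comp[OF ml]) (auto intro: measurable_compose[OF measurable_snd h])
    then show ?thesis by measurable
  qed
  have bI2: "\<bar>\<integral>y. K y y' \<partial>M\<bar> \<le> 1" if "y' \<in> space M" for y'
    by (rule prob_integral_abs_le[OF M]) (use bK that in auto)
  have iI2: "integrable M (\<lambda>y'. \<integral>y. K y y' \<partial>M)"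
    by (rule bdd_integrable[OF M, where B=1]) (auto simp: bI2 mI2)
  have "(\<integral>y. ((\<integral>y'. K y y' \<partial>M) - K y y) \<partial>M) = (\<integral>y. (\<integral>y'. K y y' \<partial>M) \<partial>M) - (\<integral>y. K y y \<partial>M)"
    by (rule Bochner_Integration.integral_diff[OF iI idiag])
  also have "(\<integral>y. (\<integral>y'. K y y' \<partial>M) \<partial>M) = (\<integral>y'. (\<integral>y. K y y' \<partial>M) \<partial>M)"
    using Fubini_integral[OF iK] by simp
  also have "\<dots> - (\<integral>y. K y y \<partial>M) = (\<integral>y'. ((\<integral>y. K y y' \<partial>M) - K y' y') \<partial>M)"
    by (rule Bochner_Integration.integral_diff[OF iI2 idiag, symmetric])
  finally have eq: "(\<integral>y. ((\<integral>y'. K y y' \<partial>M) - K y y) \<partial>M) = (\<integral>y'. ((\<integral>y. K y y' \<partial>M) - K y' y') \<partial>M)" .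
  have "\<bar>\<integral>y'. ((\<integral>y. K y y' \<partial>M) - K y' y') \<partial>M\<bar> \<le> c"
  proof (rule prob_integral_abs_le[OF M])
    fix y' assume y': "y' \<in> space M"
    have iy: "integrable M (\<lambda>y. K y y')"
      by (rule bdd_integrable[OF M, where B=1]) (use bK y' in \<open>auto simp: K_def intro!: l_comp[OF ml h]\<close>)
    have "(\<integral>y. K y y' \<partial>M) - K y' y' = (\<integral>y. (K y y' - K y' y') \<partial>M)"
    proof -
      have ic: "integrable M (\<lambda>_. K y' y')" by (rule bdd_integrable[OF M, where B="\<bar>K y' y'\<bar>"]) auto
      show ?thesis using Bochner_Integration.integral_diff[OF iy ic] by (simp add: prob_space.prob_space[OF M])
    qed
    also have "\<bar>\<dots>\<bar> \<le> c"
      by (rule prob_integral_abs_le[OF M]) (use st y' in \<open>simp add: K_def\<close>)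
    finally show "\<bar>(\<integral>y. K y y' \<partial>M) - K y' y'\<bar> \<le> c" .
  qed
  then show ?thesis using eq by (simp add: K_def)
qed

lemma gen_stab:
  fixes A :: "(nat \<Rightarrow> 'z) \<Rightarrow> real^'k" and l :: "real^'k \<Rightarrow> 'z \<Rightarrow> real"
  assumes M: "prob_space M" and m: "0 < m"
    and mA: "A \<in> borel_measurable (PiM {..<m} (\<lambda>_. M))"
    and ml: "(\<lambda>(w, z). l w z) \<in> borel_measurable (borel \<Otimes>\<^sub>M M)"
    and lb: "\<And>w z. z \<in> space M \<Longrightarrow> 0 \<le> l w z \<and> l w z \<le> 1"
    and st: "\<And>z z' y. z \<in> space (PiM {..<m} (\<lambda>_. M)) \<Longrightarrow> z' \<in> space (PiM {..<m} (\<lambda>_. M))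
       \<Longrightarrow> (\<exists>i<m. \<forall>j<m. j \<noteq> i \<longrightarrow> z j = z' j) \<Longrightarrow> y \<in> space M
       \<Longrightarrow> \<bar>l (A z) y - l (A z') y\<bar> \<le> c"
  shows "gen_err M m A l \<le> c"
proof -
  define P where "P = PiM {..<m} (\<lambda>_. M)"
  interpret prob_space M by fact
  interpret product_sigma_finite "\<lambda>_. M"
    by (simp add: product_sigma_finite_def sigma_finite_measure_axioms)
  have PP: "prob_space P" unfolding P_def by (rule prob_space_PiM) (simp add: M)
  define g1 where "g1 z = (\<integral>y. l (A z) y \<partial>M)" for z
  define g2 where "g2 i z = l (A z) (z i)" for i z
  have mAP: "A \<in> borel_measurable P" using mA by (simp add: P_def)
  have mg1: "g1 \<in> borel_measurable P"
  proof -
    have "case_prod (\<lambda>z y. l (A z) y) \<in> borel_measurable (P \<Otimes>\<^sub>M M)"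
      unfolding split_beta' by (rule l_comp[OF ml]) (auto intro: measurable_compose[OF measurable_fst mAP])
    then show ?thesis unfolding g1_def by measurable
  qed
  have mg2: "g2 i \<in> borel_measurable P" if "i < m" for i
    unfolding g2_def by (rule l_comp[OF ml mAP]) (use that in \<open>simp add: P_def\<close>)
  have sp: "z i \<in> space M" if "z \<in> space P" "i < m" for z i
    using that by (auto simp: P_def space_PiM)
  have bg1: "\<bar>g1 z\<bar> \<le> 1" for z
    unfolding g1_def by (rule prob_integral_abs_le[OF M]) (use lb in force)
  have bg2: "\<bar>g2 i z\<bar> \<le> 1" if "z \<in> space P" "i < m" for i z
    unfolding g2_def using lb[OF sp[OF that]] by simp
  have iF: "integrable P (\<lambda>z. g1 z - g2 i z)" if "i < m" for i
  proof (rule bdd_integrable[OF PP, where B=2])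
    show "(\<lambda>z. g1 z - g2 i z) \<in> borel_measurable P" using mg1 mg2[OF that] by measurable
    fix z assume "z \<in> space P"
    then show "\<bar>g1 z - g2 i z\<bar> \<le> 2" using bg1[of z] bg2[of z i] that by linarith
  qed
  have key: "\<bar>\<integral>z. (g1 z - g2 i z) \<partial>P\<bar> \<le> c" if i: "i < m" for i
  proof -
    define J where "J = {..<m} - {i}"
    have ins: "insert i J = {..<m}" and iJ: "i \<notin> J" and fJ: "finite J" using i by (auto simp: J_def)
    have "(\<integral>z. (g1 z - g2 i z) \<partial>P) = (\<integral>x. (\<integral>y. (g1 (x(i:=y)) - g2 i (x(i:=y))) \<partial>M) \<partial>PiM J (\<lambda>_. M))"
      using product_integral_insert[OF fJ iJ, of "\<lambda>z. g1 z - g2 i z"] iF[OF i] by (simp add: ins P_def)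
    also have "\<bar>\<dots>\<bar> \<le> c"
    proof (rule prob_integral_abs_le)
      show "prob_space (PiM J (\<lambda>_. M))" by (rule prob_space_PiM) (simp add: M)
      fix x assume x: "x \<in> space (PiM J (\<lambda>_. M))"
      have upd: "(\<lambda>y. x(i:=y)) \<in> measurable M P"
        using measurable_component_update[OF x iJ] by (simp add: ins P_def)
      define h where "h y = A (x(i:=y))" for y
      have mh: "h \<in> borel_measurable M" unfolding h_def by (rule measurable_compose[OF upd mAP])
      have "\<bar>\<integral>y. ((\<integral>y'. l (h y) y' \<partial>M) - l (h y) y) \<partial>M\<bar> \<le> c"
      proof (rule inner_swap_bound[OF M ml mh lb])
        fix y y' assume y: "y \<in> space M" and y': "y' \<in> space M"
        show "\<bar>l (h y) y' - l (h y') y'\<bar> \<le> c" unfolding h_def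
          by (rule st[OF measurable_space[OF upd y, unfolded P_def] measurable_space[OF upd y', unfolded P_def] _ y'])
             (use i in auto)
      qed
      then show "\<bar>\<integral>y. (g1 (x(i:=y)) - g2 i (x(i:=y))) \<partial>M\<bar> \<le> c"
        by (simp add: g1_def g2_def h_def)
    qed
    finally show ?thesis .
  qed
  have eq: "true_loss M l (A z) - emp_loss m l (A z) z = (1 / real m) * (\<Sum>i<m. g1 z - g2 i z)" for z
    using m by (simp add: true_loss_def emp_loss_def g1_def g2_def sum_subtractf field_simps)
  have "(\<integral>z. (true_loss M l (A z) - emp_loss m l (A z) z) \<partial>P) = (1 / real m) * (\<Sum>i<m. \<integral>z. (g1 z - g2 i z) \<partial>P)"
    unfolding eq integral_mult_right_zero by (subst Bochner_Integration.integral_sum) (auto simp: iF)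
  also have "\<bar>\<dots>\<bar> \<le> (1 / real m) * (\<Sum>i<m. c)"
  proof -
    have "\<bar>\<Sum>i<m. \<integral>z. (g1 z - g2 i z) \<partial>P\<bar> \<le> (\<Sum>i<m. c)"
      by (rule order_trans[OF sum_abs sum_mono]) (simp add: key)
    then show ?thesis using m by (simp add: abs_mult divide_le_eq mult.commute)
  qed
  also have "\<dots> = c" using m by simp
  finally show ?thesis by (simp add: gen_err_def P_def)
qed

theorem theorem4:
  fixes M :: "'z measure" and n :: nat
    and A :: "(nat \<Rightarrow> 'z) \<Rightarrow> real^'k"
    and l :: "real^'k \<Rightarrow> 'z \<Rightarrow> real"
    and L eps :: real and S :: "real^'k^'k"
  assumes "n \<ge> 2"
    and "prob_space M"
    and "A \<in> borel_measurable (PiM {..<n-1} (\<lambda>_. M))"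
    and "(\<lambda>(w, z). l w z) \<in> borel_measurable (borel \<Otimes>\<^sub>M M)"
    and "\<And>w z. z \<in> space M \<Longrightarrow> 0 \<le> l w z \<and> l w z \<le> 1"
    and "\<And>w w' z. z \<in> space M \<Longrightarrow> \<bar>l w z - l w' z\<bar> \<le> L * norm (w - w')"
    and "pos_def_mat S"
    and "eps \<ge> 0"
    and "weight_stable M (n-1) A S eps"
  shows "gen_err M (n-1) A l \<le> sqrt (4 * (real n / (real n - 1)) * eps * L * sqrt (trace S))"
proof -
  note assms = assms
  define m where "m = n - 1"
  have m0: "0 < m" using assms(1) by (simp add: m_def)
  have rm: "real m = real n - 1" using assms(1) by (simp add: m_def)
  obtain z0 where z0: "z0 \<in> space M" using prob_space.not_empty[OF assms(2)] by blast
  obtain i0 :: 'k where True by blast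
  have L0: "0 \<le> L"
  proof -
    have "0 \<le> L * norm (axis i0 (1::real) - 0)" using assms(6)[OF z0, of "axis i0 1" 0] by linarith
    moreover have "norm (axis i0 (1::real) - 0) = 1" by (simp add: norm_axis_1)
    ultimately show ?thesis by simp
  qed
  have tr0: "0 \<le> trace S"
  proof -
    have "S$i$i > 0" for i
    proof -
      have "axis i 1 \<bullet> (S *v axis i 1) > 0" using assms(7) unfolding pos_def_mat_def
        by (metis axis_eq_0_iff zero_neq_one)
      moreover have "axis i 1 \<bullet> (S *v axis i 1) = S$i$i"
        by (simp only: inner_axis') (simp add: matrix_vector_mult_def axis_def if_distrib cong: if_cong)
      ultimately show ?thesis by simp
    qed
    then show ?thesis unfolding trace_def by (simp add: sum_nonneg less_imp_le)
  qed
  define c where "c = L * eps * sqrt (trace S)"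
  have c0: "0 \<le> c" using L0 assms(8) tr0 by (simp add: c_def)
  have g1: "gen_err M m A l \<le> c"
  proof (rule gen_stab[OF assms(2) m0 assms(3)[folded m_def] assms(4) assms(5)])
    fix z z' y
    assume z: "z \<in> space (PiM {..<m} (\<lambda>_. M))" and z': "z' \<in> space (PiM {..<m} (\<lambda>_. M))"
      and d: "\<exists>i<m. \<forall>j<m. j \<noteq> i \<longrightarrow> z j = z' j" and y: "y \<in> space M"
    define a where "a = A z - A z'"
    have "a \<bullet> (matrix_inv S *v a) \<le> eps^2"
      using assms(9) z z' d unfolding weight_stable_def m_def[symmetric] a_def Let_def
      by (auto simp: space_PiM)
    then have "(norm a)^2 \<le> eps^2 * trace S"
      using norm_bound_inv[OF assms(7), of a] tr0 mult_right_mono by fastforce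
    then have "norm a \<le> eps * sqrt (trace S)"
      using assms(8) tr0 by (metis norm_ge_zero real_le_rsqrt real_sqrt_mult real_sqrt_pow2 real_sqrt_abs abs_of_nonneg real_sqrt_le_iff)
    then have "L * norm a \<le> c" unfolding c_def using L0 by (metis mult.assoc mult_left_mono)
    then show "\<bar>l (A z) y - l (A z') y\<bar> \<le> c" using assms(6)[OF y, of "A z" "A z'"] unfolding a_def by linarith
  qed
  have g2: "gen_err M m A l \<le> 1"
  proof (rule gen_stab[OF assms(2) m0 assms(3)[folded m_def] assms(4) assms(5)])
    fix z z' y assume "y \<in> space M"
    then show "\<bar>l (A z) y - l (A z') y\<bar> \<le> 1" using assms(5)[of y "A z"] assms(5)[of y "A z'"] by linarith
  qed
  have gn: "0 \<le> gen_err M m A l" by (simp add: gen_err_def)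
  have "gen_err M m A l = sqrt ((gen_err M m A l)^2)" using gn by simp
  also have "\<dots> \<le> sqrt c"
  proof -
    have "(gen_err M m A l)^2 \<le> 1 * c" unfolding power2_eq_square
      by (rule mult_mono[OF g2 g1]) (use gn in auto)
    then show ?thesis using real_sqrt_le_mono by fastforce
  qed
  also have "\<dots> \<le> sqrt (4 * (real n / (real n - 1)) * eps * L * sqrt (trace S))"
  proof -
    have k: "1 \<le> 4 * (real n / (real n - 1))" using assms(1) by (simp add: field_simps)
    have "c \<le> (4 * (real n / (real n - 1))) * c" using mult_right_mono[OF k c0] by simp
    then show ?thesis by (simp add: c_def mult.assoc mult.left_commute)
  qed
  finally show ?thesis by (simp add: m_def)
qed

end
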